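(* Let $h:\mathbb{R}\to\mathbb{R}$ be a smooth function with $h(T)=\pi/2$ for $T\le 0$, $0<h(T)<\pi/2$ for $0<T<1$, and $h(T)=0$ for $T\ge 1$. For $0<x<1$ let $g(x)=\tan\bigl(h(x)\bigr)$, and for $0\le x<1$ let $B(x)=\exp\left(\int_0^x \cot\bigl(h(z)\bigr)\,dz\right)$. Assume $g'''(x)<0$ for all $0<x<1$. Define, for $0<x<1$, $$\mathcal{C}(x)=\frac{1}{B(x)}\int_0^{x}\cos(x-z)\,B'(z)\,\frac{g(x)-g(z)}{x-z}\,dz .$$ Then $\lim_{x\to 1_-}\mathcal{C}(x)=0$.
   Context: The quotient $\frac{g(x)-g(z)}{x-z}$ is understood as $g'(x)$ at $z=x$. (In the paper the variable $x$ appears as $y+A$.) *)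

theory Defs
  imports "HOL-Analysis.Analysis"
begin

definition smooth_real :: "(real \<Rightarrow> real) \<Rightarrow> bool" where
  "smooth_real f \<longleftrightarrow> (\<forall>n x. ((deriv ^^ n) f) differentiable (at x))"

end

theory Submission
  imports Defs "HOL-Real_Asymp.Real_Asymp"
begin

theorem mainTheorem4:
  fixes h :: "real \<Rightarrow> real"
  assumes smooth: "smooth_real h"
    and h_neg: "\<And>T. T \<le> 0 \<Longrightarrow> h T = pi / 2"
    and h_mid: "\<And>T. 0 < T \<Longrightarrow> T < 1 \<Longrightarrow> 0 < h T \<and> h T < pi / 2"
    and h_big: "\<And>T. 1 \<le> T \<Longrightarrow> h T = 0"
  defines "g \<equiv> (\<lambda>x. tan (h x))"
    and "B \<equiv> (\<lambda>x. exp (integral {0..x} (\<lambda>z. cot (h z))))"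
  assumes g3: "\<And>x. 0 < x \<Longrightarrow> x < 1 \<Longrightarrow> deriv (deriv (deriv g)) x < 0"
  defines "C \<equiv> (\<lambda>x. (1 / B x) * integral {0..x}
              (\<lambda>z. cos (x - z) * deriv B z *
                   (if z = x then deriv g x else (g x - g z) / (x - z))))"
  shows "(C \<longlongrightarrow> 0) (at_left 1)"
proof -
  define f where "f = (\<lambda>z. cot (h z))"
  define F where "F = (\<lambda>x. integral {0..x} f)"
  have B_eq: "\<And>x. B x = exp (F x)" unfolding B_def F_def f_def by simp
  have hD: "\<And>x. (h has_real_derivative deriv h x) (at x)"
  proof -
    fix x
    have "((deriv ^^ 0) h) differentiable (at x)" using smooth unfolding smooth_real_def by blast
    thus "(h has_real_derivative deriv h x) (at x)" by (simp add: DERIV_deriv_iff_real_differentiable)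
  qed
  have dhc: "\<And>x. isCont (deriv h) x"
  proof -
    fix x
    have "((deriv ^^ 1) h) differentiable (at x)" using smooth unfolding smooth_real_def by blast
    thus "isCont (deriv h) x" by (simp add: differentiable_imp_continuous_within)
  qed
  have hc: "\<And>x. isCont h x" using hD DERIV_isCont by blast
  have hpos: "\<And>t. 0 < t \<Longrightarrow> 0 \<le> h t \<and> h t < pi/2"
  proof -
    fix t :: real assume "0 < t"
    show "0 \<le> h t \<and> h t < pi/2"
      using h_mid[of t] h_big[of t] \<open>0 < t\<close> by (cases "t < 1") auto
  qed
  have hlt1: "\<And>t. t < 1 \<Longrightarrow> 0 < h t \<and> h t \<le> pi/2"
  proof -
    fix t :: real assume "t < 1"
    show "0 < h t \<and> h t \<le> pi/2"
    proof (cases "0 < t")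
      case True then show ?thesis using h_mid[of t] \<open>t < 1\<close> by auto
    next
      case False then have "h t = pi/2" using h_neg[of t] by auto
      then show ?thesis using pi_gt_zero by linarith
    qed
  qed
  have cospos: "\<And>t. 0 < t \<Longrightarrow> cos (h t) > 0"
  proof -
    fix t :: real assume "0 < t"
    then have "0 \<le> h t" "h t < pi/2" using hpos by auto
    then show "cos (h t) > 0" using pi_gt_zero by (intro cos_gt_zero_pi) linarith+
  qed
  have sinpos: "\<And>t. t < 1 \<Longrightarrow> sin (h t) > 0"
  proof -
    fix t :: real assume "t < 1"
    then have "0 < h t" "h t \<le> pi/2" using hlt1 by auto
    then show "sin (h t) > 0" using pi_gt_zero by (intro sin_gt_zero) linarith+
  qed
  have dh1: "deriv h 1 = 0"
  proof (rule DERIV_local_min[OF hD, of 1 1])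
    show "\<forall>y. \<bar>1 - y\<bar> < 1 \<longrightarrow> h 1 \<le> h y"
    proof (intro allI impI)
      fix y :: real assume "\<bar>1 - y\<bar> < 1"
      then have "0 < y" by auto
      then show "h 1 \<le> h y" using hpos h_big by simp
    qed
  qed simp
  define \<phi> where "\<phi> = (\<lambda>t. deriv h t / (cos (h t))^2)"
  have gD: "\<And>t. 0 < t \<Longrightarrow> (g has_real_derivative \<phi> t) (at t)"
  proof -
    fix t :: real assume "0 < t"
    have "cos (h t) \<noteq> 0" using cospos[OF \<open>0<t\<close>] by simp
    from DERIV_chain2[OF DERIV_tan[OF this] hD[of t]]
    show "(g has_real_derivative \<phi> t) (at t)"
      unfolding g_def \<phi>_def by (simp add: divide_inverse mult.commute)
  qed
  have gderiv: "\<And>t. 0 < t \<Longrightarrow> deriv g t = \<phi> t" using gD DERIV_imp_deriv by blast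
  have gc: "\<And>t. 0 < t \<Longrightarrow> isCont g t" using gD DERIV_isCont by blast
  have h1: "h 1 = 0" using h_big by simp
  have \<phi>c: "isCont \<phi> 1"
    unfolding \<phi>_def using dhc hc h1 by (intro continuous_intros) auto
  have \<phi>1: "\<phi> 1 = 0" using dh1 by (simp add: \<phi>_def)
  have gsmall: "\<exists>a. 0 < a \<and> a < 1 \<and> (\<forall>t. a \<le> t \<longrightarrow> t < 1 \<longrightarrow> \<bar>\<phi> t\<bar> \<le> \<epsilon>)" if "\<epsilon> > 0" for \<epsilon>
  proof -
    from \<phi>c that obtain d where d: "d > 0" "\<And>y. y \<noteq> 1 \<Longrightarrow> norm (y - 1) < d \<Longrightarrow> norm (\<phi> y - \<phi> 1) < \<epsilon>"
      unfolding isCont_def LIM_eq by blast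
    define a where "a = max (1/2) (1 - d/2)"
    have "\<bar>\<phi> t\<bar> \<le> \<epsilon>" if "a \<le> t" "t < 1" for t
      using d(2)[of t] that d(1) \<phi>1 by (auto simp: a_def)
    moreover have "0 < a" "a < 1" using d(1) by (auto simp: a_def)
    ultimately show ?thesis by blast
  qed
  have g1: "g 1 = 0" using h1 by (simp add: g_def)
  have gpos: "\<And>t. 0 < t \<Longrightarrow> t < 1 \<Longrightarrow> g t > 0"
    unfolding g_def using h_mid by (intro tan_gt_zero) auto
  have fg: "\<And>t. 0 < t \<Longrightarrow> t < 1 \<Longrightarrow> f t * g t = 1"
  proof -
    fix t :: real assume t: "0 < t" "t < 1"
    show "f t * g t = 1" using cospos[of t] sinpos[of t] t
      by (simp add: f_def g_def cot_def tan_def)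
  qed
  have fpos: "\<And>t. 0 < t \<Longrightarrow> t < 1 \<Longrightarrow> f t > 0"
    using cospos sinpos by (simp add: f_def cot_def)
  have fc: "\<And>t. t < 1 \<Longrightarrow> isCont f t"
    unfolding f_def using hc sinpos by (intro continuous_intros) (auto dest: sinpos)
  have fcon: "\<And>x. x < 1 \<Longrightarrow> continuous_on {0..x} f"
    using fc by (intro continuous_at_imp_continuous_on) auto
  have FDw: "\<And>x z. x < 1 \<Longrightarrow> z \<in> {0..x} \<Longrightarrow> (F has_real_derivative f z) (at z within {0..x})"
    unfolding F_def using fcon integral_has_real_derivative by blast
  have FD: "\<And>z. 0 < z \<Longrightarrow> z < 1 \<Longrightarrow> (F has_real_derivative f z) (at z)"
  proof -
    fix z :: real assume z: "0 < z" "z < 1"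
    define b where "b = (1 + z) / 2"
    have "(F has_real_derivative f z) (at z within {0..b})"
      using FDw[of b z] z by (auto simp: b_def)
    then have "(F has_real_derivative f z) (at z within {0<..<b})"
      by (rule DERIV_subset) auto
    moreover have "at z within {0<..<b} = at z"
      using z by (intro at_within_open) (auto simp: b_def)
    ultimately show "(F has_real_derivative f z) (at z)" by simp
  qed
  have BDw: "\<And>x z. x < 1 \<Longrightarrow> z \<in> {0..x} \<Longrightarrow> (B has_real_derivative B z * f z) (at z within {0..x})"
    unfolding B_eq using DERIV_chain2[OF DERIV_exp FDw] by blast
  have BD: "\<And>z. 0 < z \<Longrightarrow> z < 1 \<Longrightarrow> (B has_real_derivative B z * f z) (at z)"
    unfolding B_eq using DERIV_chain2[OF DERIV_exp FD] by blast
  have Bderiv: "\<And>z. 0 < z \<Longrightarrow> z < 1 \<Longrightarrow> deriv B z = B z * f z"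
    using BD DERIV_imp_deriv by blast
  have Bpos: "\<And>x. B x > 0" by (simp add: B_eq)
  have B0: "B 0 = 1" by (simp add: B_eq F_def)
  have Bcon: "\<And>x. x < 1 \<Longrightarrow> continuous_on {0..x} B"
  proof -
    fix x :: real assume "x < 1"
    show "continuous_on {0..x} B" by (rule DERIV_continuous_on[OF BDw[OF \<open>x < 1\<close>]])
  qed
  have Bc: "\<And>z. 0 < z \<Longrightarrow> z < 1 \<Longrightarrow> isCont B z" by (rule DERIV_isCont[OF BD])
  have Binf: "filterlim B at_top (at_left 1)"
  proof -
    obtain a1 where a1: "0 < a1" "a1 < 1" "\<And>t. a1 \<le> t \<Longrightarrow> t < 1 \<Longrightarrow> \<bar>\<phi> t\<bar> \<le> 1"
      using gsmall[of 1] by auto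
    have gle: "g t \<le> 1 - t" if t: "a1 \<le> t" "t < 1" for t
    proof -
      obtain \<xi> where \<xi>: "\<xi> > t" "\<xi> < 1" "g 1 - g t = (1 - t) * \<phi> \<xi>"
        using MVT2[of t 1 g \<phi>] t gD a1(1) by force
      have "\<bar>\<phi> \<xi>\<bar> \<le> 1" using a1(3)[of \<xi>] \<xi> t by auto
      then have "\<phi> \<xi> \<ge> -1" by linarith
      then have "(1 - t) * \<phi> \<xi> \<ge> - (1 - t)" using mult_left_mono[of "-1" "\<phi> \<xi>" "1-t"] t by simp
      then show ?thesis using \<xi>(3) g1 by linarith
    qed
    have fge: "f t \<ge> 1 / (1 - t)" if t: "a1 \<le> t" "t < 1" for t
    proof -
      have gt: "g t > 0" using gpos[of t] t a1 by simp
      have "f t = 1 / g t" using fg[of t] t a1 gt by (simp add: field_simps)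
      also have "\<dots> \<ge> 1 / (1 - t)" using gle[OF t] gt by (intro divide_left_mono) auto
      finally show ?thesis .
    qed
    define c where "c = F a1 + ln (1 - a1)"
    have mono: "c - ln (1 - x) \<le> F x" if x: "a1 \<le> x" "x < 1" for x
    proof -
      have "F a1 + ln (1 - a1) \<le> F x + ln (1 - x)"
      proof (rule DERIV_nonneg_imp_nondecreasing[OF x(1)])
        fix y assume y: "a1 \<le> y" "y \<le> x"
        have "((\<lambda>y. F y + ln (1 - y)) has_real_derivative f y + inverse (1 - y) * (0 - 1)) (at y)"
        proof (rule DERIV_add)
          show "(F has_real_derivative f y) (at y)" using y x a1 by (intro FD) auto
          have "(ln has_real_derivative inverse (1 - y)) (at (1 - y))" using y x by (intro DERIV_ln) auto
          then show "((\<lambda>y. ln (1 - y)) has_real_derivative inverse (1 - y) * (0 - 1)) (at y)"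
            by (rule DERIV_chain2) (intro derivative_intros)
        qed
        moreover have "f y + inverse (1 - y) * (0 - 1) \<ge> 0"
          using fge[of y] y x by (simp add: divide_inverse)
        ultimately show "\<exists>d. ((\<lambda>y. F y + ln (1 - y)) has_real_derivative d) (at y) \<and> d \<ge> 0"
          by blast
      qed
      then show ?thesis by (simp add: c_def)
    qed
    have "filterlim (\<lambda>x. c - ln (1 - x)) at_top (at_left (1::real))" by real_asymp
    moreover have "eventually (\<lambda>x. c - ln (1 - x) \<le> F x) (at_left 1)"
      using eventually_at_left_real[OF a1(2)] by eventually_elim (use mono in auto)
    ultimately have "filterlim F at_top (at_left 1)" by (rule filterlim_at_top_mono)
    then have "filterlim (\<lambda>x. exp (F x)) at_top (at_left 1)"
      by (rule filterlim_compose[OF exp_at_top])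
    moreover have "B = (\<lambda>x. exp (F x))" by (intro ext) (rule B_eq)
    ultimately show ?thesis by simp
  qed
  define K where "K = (\<lambda>x z. cos (x - z) * deriv B z *
                   (if z = x then deriv g x else (g x - g z) / (x - z)))"
  have C_eq: "\<And>x. C x = integral {0..x} (K x) / B x" by (simp add: C_def K_def)
  show ?thesis
    unfolding tendsto_iff
  proof (intro allI impI)
    fix e :: real assume e: "e > 0"
    define \<epsilon> where "\<epsilon> = e / 4"
    have \<epsilon>: "\<epsilon> > 0" using e by (simp add: \<epsilon>_def)
    obtain a where a: "0 < a" "a < 1" "\<And>t. a \<le> t \<Longrightarrow> t < 1 \<Longrightarrow> \<bar>\<phi> t\<bar> \<le> \<epsilon>"
      using gsmall[OF \<epsilon>] by auto
    define b where "b = (1 + a) / 2"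
    have b: "a < b" "b < 1" using a by (auto simp: b_def)
    have cBf: "continuous_on {0..a} (\<lambda>z. B z * f z)"
      using Bcon fcon a by (intro continuous_intros) auto
    obtain MBf where MBf: "MBf \<ge> 0" "\<And>z. z \<in> {0..a} \<Longrightarrow> \<bar>B z * f z\<bar> \<le> MBf"
      using continuous_on_compact_bound[OF compact_Icc cBf, unfolded real_norm_def] by blast
    obtain MB where MB: "MB \<ge> 0" "\<And>z. z \<in> {0..a} \<Longrightarrow> \<bar>B z\<bar> \<le> MB"
      using continuous_on_compact_bound[OF compact_Icc Bcon[OF a(2)], unfolded real_norm_def] by blast
    have cg: "continuous_on {a..1} g" using gc a by (intro continuous_at_imp_continuous_on) auto
    obtain Mg where Mg: "Mg \<ge> 0" "\<And>z. z \<in> {a..1} \<Longrightarrow> \<bar>g z\<bar> \<le> Mg"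
      using continuous_on_compact_bound[OF compact_Icc cg, unfolded real_norm_def] by blast
    define M where "M = (MBf * Mg + MB) / (b - a)"
    have M0: "M \<ge> 0" using MBf MB Mg b by (simp add: M_def)
    have Kb: "\<bar>K x z\<bar> \<le> M + \<epsilon> * (B z * f z)" if x: "b < x" "x < 1" and z: "z \<in> {0<..<x}" for x z
    proof -
      have z0: "0 < z" "z < x" using z by auto
      have z1: "z < 1" using z0 x by linarith
      have zx: "z \<noteq> x" using z0 by simp
      have Kz: "K x z = cos (x - z) * (B z * f z) * ((g x - g z) / (x - z))"
        using Bderiv[OF z0(1) z1] zx by (simp add: K_def)
      have Bfpos: "B z * f z > 0" using Bpos[of z] fpos[OF z0(1) z1] by simp
      have "\<bar>K x z\<bar> \<le> (B z * f z) * \<bar>(g x - g z) / (x - z)\<bar>"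
      proof -
        have "\<bar>K x z\<bar> = \<bar>cos (x - z)\<bar> * ((B z * f z) * \<bar>(g x - g z) / (x - z)\<bar>)"
          unfolding Kz abs_mult[of "cos (x - z) * (B z * f z)"] abs_mult[of "cos (x - z)" "B z * f z"]
            abs_of_pos[OF Bfpos] by (simp only: mult.assoc)
        also have "\<dots> \<le> 1 * ((B z * f z) * \<bar>(g x - g z) / (x - z)\<bar>)"
          using Bfpos by (intro mult_right_mono) auto
        finally show ?thesis by simp
      qed
      also have "\<dots> \<le> M + \<epsilon> * (B z * f z)"
      proof (cases "z < a")
        case True
        have za: "z \<in> {0..a}" using True z0 by auto
        have xa: "x \<in> {a..1}" using x b by auto
        have xz: "x - z > 0" using z0 by simp
        have "(B z * f z) * \<bar>(g x - g z) / (x - z)\<bar> = \<bar>B z * f z * g x - B z * (f z * g z)\<bar> / (x - z)"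
        proof -
          have e1: "B z * f z * g x - B z * (f z * g z) = (B z * f z) * (g x - g z)" by (simp add: algebra_simps)
          have "\<bar>B z * f z * g x - B z * (f z * g z)\<bar> = (B z * f z) * \<bar>g x - g z\<bar>"
            unfolding e1 abs_mult[of "B z * f z"] abs_of_pos[OF Bfpos] ..
          moreover have "\<bar>(g x - g z) / (x - z)\<bar> = \<bar>g x - g z\<bar> / (x - z)"
            using xz by (simp add: abs_divide)
          ultimately show ?thesis by simp
        qed
        also have "B z * (f z * g z) = B z" using fg[OF z0(1) z1] by simp
        finally have eq: "(B z * f z) * \<bar>(g x - g z) / (x - z)\<bar> = \<bar>B z * f z * g x - B z\<bar> / (x - z)" .
        have num: "\<bar>B z * f z * g x - B z\<bar> \<le> MBf * Mg + MB"
        proof -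
          have "\<bar>B z * f z * g x - B z\<bar> \<le> \<bar>B z * f z * g x\<bar> + \<bar>B z\<bar>" by (rule abs_triangle_ineq4)
          also have "\<bar>B z * f z * g x\<bar> = \<bar>B z * f z\<bar> * \<bar>g x\<bar>" by (rule abs_mult)
          also have "\<bar>B z * f z\<bar> * \<bar>g x\<bar> + \<bar>B z\<bar> \<le> MBf * Mg + MB"
            using MBf(2)[OF za] MB(2)[OF za] Mg(2)[OF xa] MBf(1) by (intro add_mono mult_mono) auto
          finally show ?thesis .
        qed
        have "\<bar>B z * f z * g x - B z\<bar> / (x - z) \<le> (MBf * Mg + MB) / (x - z)"
          using num xz by (intro divide_right_mono) auto
        also have "\<dots> \<le> (MBf * Mg + MB) / (b - a)"
          using xz True x b MBf MB Mg by (intro divide_left_mono) auto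
        also have "\<dots> = M" by (simp add: M_def)
        finally show ?thesis using eq \<epsilon> Bfpos
          by (smt (verit) mult_pos_pos)
      next
        case False
        have "\<forall>y. z \<le> y \<and> y \<le> x \<longrightarrow> (g has_real_derivative \<phi> y) (at y)"
          using gD z0 by auto
        then obtain \<xi> where \<xi>: "\<xi> > z" "\<xi> < x" "g x - g z = (x - z) * \<phi> \<xi>"
          using MVT2[of z x g \<phi>] z0 by blast
        have "(g x - g z) / (x - z) = \<phi> \<xi>" using \<xi>(3) z0 by simp
        moreover have "\<bar>\<phi> \<xi>\<bar> \<le> \<epsilon>" using a(3)[of \<xi>] \<xi> False x by auto
        ultimately have "(B z * f z) * \<bar>(g x - g z) / (x - z)\<bar> \<le> (B z * f z) * \<epsilon>"
          using Bfpos by (intro mult_left_mono) auto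
        then show ?thesis using M0 by (simp add: mult.commute)
      qed
      finally show ?thesis .
    qed
    have Kint: "\<bar>integral {0..x} (K x)\<bar> \<le> M + \<epsilon> * B x" if x: "b < x" "x < 1" for x
    proof -
      have x0: "0 \<le> x" using x a b by auto
      have int_eq: "integral {0..x} (K x) = integral {0<..<x} (K x)" by (rule integral_open_interval_real)
      have BfD: "\<And>z. z \<in> {0..x} \<Longrightarrow> (B has_vector_derivative B z * f z) (at z within {0..x})"
        using BDw[OF x(2)] by (simp add: has_real_derivative_iff_has_vector_derivative)
      have ftc: "((\<lambda>z. B z * f z) has_integral B x - B 0) {0..x}"
        by (rule fundamental_theorem_of_calculus[OF x0 BfD])
      have c: "((\<lambda>z. M) has_integral x * M) {0..x}"
        using has_integral_const_real[of M 0 x] x0 by simp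
      have m: "((\<lambda>z. \<epsilon> * (B z * f z)) has_integral \<epsilon> * (B x - B 0)) {0..x}"
        by (rule has_integral_mult_right[OF ftc])
      have "((\<lambda>z. M + \<epsilon> * (B z * f z)) has_integral x * M + \<epsilon> * (B x - B 0)) {0..x}"
        by (rule has_integral_add[OF c m])
      then have hi: "((\<lambda>z. M + \<epsilon> * (B z * f z)) has_integral x * M + \<epsilon> * (B x - B 0)) {0<..<x}"
        by (simp add: has_integral_Icc_iff_Ioo)
      have "continuous_on {0<..<x} (\<lambda>z. cos (x - z) * (B z * f z) * ((g x - g z) / (x - z)))"
      proof (rule continuous_at_imp_continuous_on, intro ballI)
        fix z assume z: "z \<in> {0<..<x}"
        then have z0: "0 < z" "z < 1" "x - z \<noteq> 0" using x by auto
        show "isCont (\<lambda>z. cos (x - z) * (B z * f z) * ((g x - g z) / (x - z))) z"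
          using Bc[OF z0(1,2)] fc[OF z0(2)] gc[OF z0(1)] z0(3) by (intro continuous_intros) auto
      qed
      moreover have "\<And>z. z \<in> {0<..<x} \<Longrightarrow> K x z = cos (x - z) * (B z * f z) * ((g x - g z) / (x - z))"
        using Bderiv x by (auto simp: K_def)
      ultimately have "continuous_on {0<..<x} (K x)"
        using continuous_on_cong by (smt (verit))
      then have meas: "K x \<in> borel_measurable (lebesgue_on {0<..<x})"
        by (rule continuous_imp_measurable_on_sets_lebesgue) simp
      have "norm (integral {0<..<x} (K x)) \<le> x * M + \<epsilon> * (B x - B 0)"
        by (rule integral_norm_bound_integral'[OF _ meas _ hi]) (use Kb[OF x] in auto)
      moreover have "x * M \<le> M" using mult_right_mono[of x 1 M] x M0 by simp
      moreover have "\<epsilon> * (B x - B 0) \<le> \<epsilon> * B x" using B0 \<epsilon> by (simp add: right_diff_distrib)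
      ultimately show ?thesis using int_eq by simp
    qed
    have ev1: "eventually (\<lambda>x. M / \<epsilon> + 1 \<le> B x) (at_left 1)"
      using Binf by (simp add: filterlim_at_top)
    show "eventually (\<lambda>x. dist (C x) 0 < e) (at_left 1)"
      using ev1 eventually_at_left_real[OF b(2)]
    proof eventually_elim
      case (elim x)
      have xb: "b < x" "x < 1" using elim by auto
      have Bx: "B x > 0" by (rule Bpos)
      have "M < \<epsilon> * B x" using elim(1) \<epsilon> by (simp add: field_simps)
      have "\<bar>C x\<bar> \<le> (M + \<epsilon> * B x) / B x"
        unfolding C_eq using Kint[OF xb] Bx by (simp add: abs_div divide_right_mono)
      also have "\<dots> < 2 * \<epsilon>" using \<open>M < \<epsilon> * B x\<close> Bx by (simp add: field_simps)
      finally show ?case using e by (simp add: \<epsilon>_def)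
    qed
  qed
qed

end
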